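(* Let $F$ be a probability measure on $[-a,a]$ and $\sigma>0$ with $\sigma<a$. Let $\varepsilon\in(0,\pi^{-1/2})$. Then there exists a discrete probability distribution $F'$ on $[-a,a]$ with at most $54\,a\,\sigma^{-1}e^2\big[1\vee\ln\big(\frac{1}{\sqrt\pi\,\varepsilon}\big)\big]$ support points such that $$\|F*\psi_\sigma-F'*\psi_\sigma\|_\infty\le\frac{2\varepsilon}{\sigma}.$$
   Context: $\psi(x)=\pi^{-1/2}e^{-x^2}$, $\psi_\sigma(x)=\sigma^{-1}\psi(x/\sigma)$, and for a measure $F$, $F*\psi_\sigma(x)=\int\psi_\sigma(x-u)\,dF(u)$. *)

theory Defs
  imports "HOL-Probability.Probability"
begin

definition psi :: "real \<Rightarrow> real" where
  "psi x = exp (- (x^2)) / sqrt pi"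

definition psi_sigma :: "real \<Rightarrow> real \<Rightarrow> real" where
  "psi_sigma \<sigma> x = psi (x / \<sigma>) / \<sigma>"

definition conv_psi :: "real measure \<Rightarrow> real \<Rightarrow> real \<Rightarrow> real" where
  "conv_psi F \<sigma> x = (\<integral>u. psi_sigma \<sigma> (x - u) \<partial>F)"

end

theory Submission imports Defs "HOL-Complex_Analysis.Complex_Analysis" "HOL-Library.Function_Algebras" begin


interpretation fv: vector_space "\<lambda>(r::real) (f::nat\<Rightarrow>real). (\<lambda>i. r * f i)"
  by unfold_locales (auto simp: fun_eq_iff algebra_simps)

lemma sum_fun_apply: "(\<Sum>x\<in>A. (f x :: nat \<Rightarrow> real)) n = (\<Sum>x\<in>A. f x n)"
  by (induction A rule: infinite_finite_induct) auto

lemma kernel_exists: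
  fixes U :: "real set" and c :: real
  assumes fin: "finite U" and cU: "card U = L + 2" and L1: "L \<ge> 1"
  shows "\<exists>u. (\<exists>y\<in>U. u y \<noteq> 0) \<and> (\<forall>n\<le>L. (\<Sum>y\<in>U. u y * (y - c)^n) = 0)"
proof -
  define vv where "vv y = (\<lambda>n::nat. if n \<le> L then (y-c)^n else (0::real))" for y
  define e where "e k = (\<lambda>n::nat. if n = k then 1 else (0::real))" for k
  have inj: "inj_on vv U"
  proof
    fix x y assume "vv x = vv y"
    hence "vv x 1 = vv y 1" by simp
    thus "x = y" using L1 by (simp add: vv_def)
  qed
  have vvsum: "vv y = (\<Sum>k\<le>L. (\<lambda>i. (y-c)^k * e k i))" for y
    by (rule ext) (auto simp: vv_def e_def sum_fun_apply if_distrib cong: if_cong)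
  have sp: "vv ` U \<subseteq> fv.span (e ` {..L})"
  proof
    fix v assume "v \<in> vv ` U"
    then obtain y where v: "v = vv y" by auto
    show "v \<in> fv.span (e ` {..L})"
      unfolding v vvsum
      by (intro fv.span_sum fv.span_scale fv.span_base) auto
  qed
  have "fv.dependent (vv ` U)"
  proof (rule ccontr)
    assume "\<not> fv.dependent (vv ` U)"
    from fv.independent_span_bound[OF _ this sp]
    have "card (vv ` U) \<le> card (e ` {..L})" by auto
    also have "\<dots> \<le> L + 1" using card_image_le[of "{..L}" e] by auto
    finally show False using card_image[OF inj] cU by simp
  qed
  then obtain u where u: "\<exists>v\<in>vv ` U. u v \<noteq> 0" "(\<Sum>v\<in>vv ` U. (\<lambda>i. u v * v i)) = 0"
    using fv.dependent_finite[of "vv ` U"] fin by auto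
  show ?thesis
  proof (intro exI conjI allI impI)
    show "\<exists>y\<in>U. (u \<circ> vv) y \<noteq> 0" using u(1) by auto
    fix n assume n: "n \<le> L"
    have "0 = (\<Sum>v\<in>vv ` U. (\<lambda>i. u v * v i)) n" using u(2) by simp
    also have "\<dots> = (\<Sum>y\<in>U. u (vv y) * vv y n)"
      by (simp add: sum_fun_apply sum.reindex[OF inj])
    also have "\<dots> = (\<Sum>y\<in>U. (u \<circ> vv) y * (y - c)^n)" using n by (simp add: vv_def)
    finally show "(\<Sum>y\<in>U. (u \<circ> vv) y * (y - c)^n) = 0" by simp
  qed
qed

lemma reduce_atoms:
  fixes S :: "real set" and c :: real
  assumes fin: "finite S" and L1: "L \<ge> 1"
  shows "\<forall>w. (\<forall>y\<in>S. w y \<ge> 0) \<longrightarrow> card {y\<in>S. w y \<noteq> 0} = k \<longrightarrow>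
     (\<exists>w'. (\<forall>y\<in>S. w' y \<ge> 0) \<and> card {y\<in>S. w' y \<noteq> 0} \<le> L+1 \<and>
       (\<forall>n\<le>L. (\<Sum>y\<in>S. w' y * (y-c)^n) = (\<Sum>y\<in>S. w y * (y-c)^n)))"
proof (induction k rule: less_induct)
  case (less k)
  show ?case
  proof (intro allI impI)
    fix w :: "real \<Rightarrow> real"
    assume wnn: "\<forall>y\<in>S. w y \<ge> 0" and ck: "card {y\<in>S. w y \<noteq> 0} = k"
    define T where "T = {y\<in>S. w y \<noteq> 0}"
    have finT: "finite T" using fin by (simp add: T_def)
    show "\<exists>w'. (\<forall>y\<in>S. w' y \<ge> 0) \<and> card {y\<in>S. w' y \<noteq> 0} \<le> L+1 \<and>
       (\<forall>n\<le>L. (\<Sum>y\<in>S. w' y * (y-c)^n) = (\<Sum>y\<in>S. w y * (y-c)^n))"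
    proof (cases "k \<le> L + 1")
      case True thus ?thesis using wnn ck by blast
    next
      case False
      then obtain U where U: "U \<subseteq> T" "card U = L + 2" "finite U"
        using obtain_subset_with_card_n[of "L+2" T] ck T_def by force
      obtain u where u: "\<exists>y\<in>U. u y \<noteq> 0" "\<forall>n\<le>L. (\<Sum>y\<in>U. u y * (y - c)^n) = 0"
        using kernel_exists[OF U(3) U(2) L1, of c] by blast
      have s0: "(\<Sum>y\<in>U. u y) = 0" using u(2)[rule_format, of 0] by simp
      have "\<exists>y\<in>U. u y > 0"
      proof (rule ccontr)
        assume "\<not> ?thesis"
        hence le: "\<forall>y\<in>U. u y \<le> 0" by auto
        have "(\<Sum>y\<in>U. - u y) = 0" using s0 by (simp add: sum_negf)
        hence "\<forall>y\<in>U. - u y = 0" using sum_nonneg_eq_0_iff[OF U(3), of "\<lambda>y. - u y"] le by auto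
        hence "\<forall>y\<in>U. u y = 0" by auto
        thus False using u(1) by auto
      qed
      define P where "P = {y\<in>U. u y > 0}"
      have finP: "finite P" "P \<noteq> {}" using U(3) \<open>\<exists>y\<in>U. u y > 0\<close> by (auto simp: P_def)
      define \<tau> where "\<tau> = Min ((\<lambda>y. w y / u y) ` P)"
      have "\<tau> \<in> (\<lambda>y. w y / u y) ` P"
        unfolding \<tau>_def using finP by (intro Min_in) auto
      then obtain ys where ys: "ys \<in> P" "\<tau> = w ys / u ys" by auto
      have tle: "\<tau> \<le> w y / u y" if "y \<in> P" for y
        unfolding \<tau>_def using finP that by auto
      have wpos: "w y > 0" if "y \<in> T" for y using that wnn T_def by force
      have tpos: "\<tau> \<ge> 0" using ys wpos[of ys] U(1) by (auto simp: P_def intro!: divide_nonneg_pos)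
      define u0 where "u0 y = (if y \<in> U then u y else 0)" for y
      define w2 where "w2 y = w y - \<tau> * u0 y" for y
      have w2nn: "\<forall>y\<in>S. w2 y \<ge> 0"
      proof
        fix y assume yS: "y \<in> S"
        show "w2 y \<ge> 0"
        proof (cases "y \<in> P")
          case True
          hence "\<tau> \<le> w y / u y" "u y > 0" "y \<in> U" using tle by (auto simp: P_def)
          hence "\<tau> * u y \<le> w y" by (simp add: field_simps)
          thus ?thesis using \<open>y \<in> U\<close> by (simp add: w2_def u0_def)
        next
          case False
          hence "u0 y \<le> 0" by (auto simp: P_def u0_def)
          hence "\<tau> * u0 y \<le> 0" using tpos by (simp add: mult_nonneg_nonpos)
          moreover have "w y \<ge> 0" using wnn yS by auto
          ultimately show ?thesis by (simp add: w2_def)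
        qed
      qed
      have sub: "{y\<in>S. w2 y \<noteq> 0} \<subseteq> T - {ys}"
      proof
        fix y assume y: "y \<in> {y\<in>S. w2 y \<noteq> 0}"
        have "y \<noteq> ys" using y ys U(1) by (auto simp: w2_def u0_def P_def)
        moreover have "y \<in> T"
        proof (rule ccontr)
          assume "y \<notin> T" hence "y \<notin> U" "w y = 0" using U(1) y T_def by auto
          thus False using y by (simp add: w2_def u0_def)
        qed
        ultimately show "y \<in> T - {ys}" by auto
      qed
      have ysT: "ys \<in> T" using ys U(1) P_def by auto
      have "card {y\<in>S. w2 y \<noteq> 0} \<le> card (T - {ys})"
        by (rule card_mono[OF _ sub]) (use finT in auto)
      also have "\<dots> < k" using ysT finT ck T_def False by (simp add: card_gt_0_iff)
      finally have lt: "card {y\<in>S. w2 y \<noteq> 0} < k" .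
      have mom: "(\<Sum>y\<in>S. w2 y * (y-c)^n) = (\<Sum>y\<in>S. w y * (y-c)^n)" if n: "n \<le> L" for n
      proof -
        have US: "U \<subseteq> S" using U(1) T_def by auto
        have "(\<Sum>y\<in>S. u0 y * (y-c)^n) = (\<Sum>y\<in>S. if y \<in> U then u y * (y-c)^n else 0)"
          unfolding u0_def by (rule sum.cong) auto
        also have "\<dots> = (\<Sum>y\<in>S \<inter> U. u y * (y-c)^n)"
          using sum.inter_restrict[OF fin, of "\<lambda>y. u y * (y-c)^n" U] by simp
        also have "\<dots> = (\<Sum>y\<in>U. u y * (y-c)^n)" using US by (simp add: Int_absorb1)
        also have "\<dots> = 0" using u(2) n by auto
        finally have "(\<Sum>y\<in>S. u0 y * (y-c)^n) = 0" .
        thus ?thesis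
          by (simp add: w2_def left_diff_distrib sum_subtractf sum_distrib_left[symmetric] mult.assoc)
      qed
      from less[rule_format, OF lt, of w2] w2nn obtain w' where
        "(\<forall>y\<in>S. w' y \<ge> 0)" "card {y\<in>S. w' y \<noteq> 0} \<le> L+1"
        "\<forall>n\<le>L. (\<Sum>y\<in>S. w' y * (y-c)^n) = (\<Sum>y\<in>S. w2 y * (y-c)^n)" by blast
      thus ?thesis using mom by auto
    qed
  qed
qed



lemma re_sq_bound: "Re (- ((complex_of_real s - z)^2)) \<le> (norm z)^2"
proof -
  have "Re (- ((complex_of_real s - z)^2)) = (Im z)^2 - (s - Re z)^2"
    by (simp add: power2_eq_square algebra_simps)
  also have "\<dots> \<le> (Im z)^2" by simp
  also have "\<dots> \<le> (norm z)^2" using abs_Im_le_cmod[of z] by (metis abs_ge_zero power2_abs power_mono)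
  finally show ?thesis .
qed

lemma taylor_gauss:
  fixes s r :: real and L :: nat
  assumes r: "0 \<le> r" "r < 1"
  shows "\<exists>\<alpha>::nat\<Rightarrow>real. \<forall>t::real. \<bar>t\<bar> \<le> r \<longrightarrow>
     \<bar>exp (-((s-t)^2)) - (\<Sum>n\<le>L. \<alpha> n * t^n)\<bar> \<le> exp 1 * r^(L+1) / (1 - r)"
proof -
  define f where "f z = exp (- ((complex_of_real s - z)^2))" for z
  have hol: "f holomorphic_on A" for A unfolding f_def by (intro holomorphic_intros)
  define a where "a n = (deriv ^^ n) f 0 / fact n" for n
  have abnd: "norm (a n) \<le> exp 1" for n
  proof -
    have "norm ((deriv ^^ n) f 0) \<le> fact n * exp 1 / 1^n"
    proof (rule Cauchy_inequality)
      show "continuous_on (cball 0 1) f" using hol holomorphic_on_imp_continuous_on by blast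
      fix x :: complex assume "norm (0 - x) = 1"
      hence nx: "norm x = 1" by simp
      have "norm (f x) = exp (Re (- ((complex_of_real s - x)^2)))" by (simp add: f_def)
      also have "\<dots> \<le> exp 1" using re_sq_bound[of s x] nx by simp
      finally show "norm (f x) \<le> exp 1" .
    qed (use hol in auto)
    thus ?thesis by (simp add: a_def norm_divide field_simps)
  qed
  define \<alpha> where "\<alpha> n = Re (a n)" for n
  show ?thesis
  proof (intro exI allI impI)
    fix t :: real assume t: "\<bar>t\<bar> \<le> r"
    have sums: "(\<lambda>n. a n * (complex_of_real t)^n) sums f (complex_of_real t)"
      using holomorphic_power_series[OF hol[of "ball 0 2"], of "complex_of_real t"] t r
      by (simp add: a_def)
    define g where "g n = a (n + (L+1)) * (complex_of_real t)^(n + (L+1))" for n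
    have gs: "g sums (f t - (\<Sum>n<L+1. a n * (complex_of_real t)^n))"
      unfolding g_def by (rule sums_split_initial_segment[OF sums])
    have gb: "norm (g n) \<le> exp 1 * r^(L+1) * r^n" for n
    proof -
      have "norm (g n) = norm (a (n + (L+1))) * \<bar>t\<bar>^(n+(L+1))"
        by (simp add: g_def norm_mult norm_power)
      also have "\<dots> \<le> exp 1 * r^(n+(L+1))"
        by (intro mult_mono abnd power_mono t) auto
      finally show ?thesis by (simp add: power_add mult_ac)
    qed
    have geo: "(\<lambda>n. exp 1 * r^(L+1) * r^n) sums (exp 1 * r^(L+1) * (1 / (1 - r)))"
      by (intro sums_mult geometric_sums) (use r in auto)
    have "norm (f t - (\<Sum>n<L+1. a n * (complex_of_real t)^n)) \<le> exp 1 * r^(L+1) * (1 / (1 - r))"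
      using norm_suminf_le[OF gb sums_summable[OF geo]] sums_unique[OF gs] sums_unique[OF geo] by simp
    moreover have "Re (f t - (\<Sum>n<L+1. a n * (complex_of_real t)^n)) =
        exp (-((s-t)^2)) - (\<Sum>n\<le>L. \<alpha> n * t^n)"
    proof -
      have "Re (f t) = exp (-((s-t)^2))"
        unfolding f_def by (simp flip: of_real_diff of_real_power of_real_minus add: exp_of_real del: of_real_diff of_real_power)
      moreover have "Re (a n * (complex_of_real t)^n) = \<alpha> n * t^n" for n
        by (simp add: \<alpha>_def flip: of_real_power)
      ultimately show ?thesis using lessThan_Suc_atMost by (simp add: Re_sum \<alpha>_def)
    qed
    ultimately show "\<bar>exp (-((s-t)^2)) - (\<Sum>n\<le>L. \<alpha> n * t^n)\<bar> \<le> exp 1 * r^(L+1) / (1 - r)"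
      using abs_Re_le_cmod[of "f t - (\<Sum>n<L+1. a n * (complex_of_real t)^n)"] by simp
  qed
qed

lemma group_err:
  fixes S :: "real set" and w w' :: "real \<Rightarrow> real" and c \<sigma> r x :: real
  assumes fin: "finite S" and Sc: "\<And>y. y \<in> S \<Longrightarrow> \<bar>y - c\<bar> \<le> \<sigma> * r"
    and \<sigma>: "0 < \<sigma>" and r: "0 \<le> r" "r < 1"
    and wnn: "\<And>y. y \<in> S \<Longrightarrow> w y \<ge> 0" and w'nn: "\<And>y. y \<in> S \<Longrightarrow> w' y \<ge> 0"
    and mom: "\<forall>n\<le>L. (\<Sum>y\<in>S. w' y * (y-c)^n) = (\<Sum>y\<in>S. w y * (y-c)^n)"
  shows "\<bar>\<Sum>y\<in>S. (w y - w' y) * exp (-(((x-y)/\<sigma>)^2))\<bar>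
          \<le> exp 1 * r^(L+1) / (1 - r) * ((\<Sum>y\<in>S. w y) + (\<Sum>y\<in>S. w' y))"
proof -
  define B where "B = exp 1 * r^(L+1) / (1 - r)"
  obtain \<alpha> where \<alpha>: "\<And>t. \<bar>t\<bar> \<le> r \<Longrightarrow>
     \<bar>exp (-(((x-c)/\<sigma> - t)^2)) - (\<Sum>n\<le>L. \<alpha> n * t^n)\<bar> \<le> B"
    using taylor_gauss[OF r, of "(x-c)/\<sigma>" L] unfolding B_def by blast
  define P where "P y = (\<Sum>n\<le>L. \<alpha> n * ((y-c)/\<sigma>)^n)" for y
  have E: "\<bar>exp (-(((x-y)/\<sigma>)^2)) - P y\<bar> \<le> B" if "y \<in> S" for y
  proof -
    have "\<bar>(y-c)/\<sigma>\<bar> \<le> r" using Sc[OF that] \<sigma> by (simp add: abs_divide field_simps)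
    moreover have "(x-c)/\<sigma> - (y-c)/\<sigma> = (x-y)/\<sigma>" using \<sigma> by (simp add: field_simps)
    ultimately show ?thesis using \<alpha>[of "(y-c)/\<sigma>"] unfolding P_def by simp
  qed
  have P0: "(\<Sum>y\<in>S. (w y - w' y) * P y) = 0"
  proof -
    have "(\<Sum>y\<in>S. (w y - w' y) * P y) = (\<Sum>n\<le>L. \<alpha> n / \<sigma>^n * (\<Sum>y\<in>S. (w y - w' y) * (y-c)^n))"
      unfolding P_def sum_distrib_left by (subst sum.swap) (auto intro!: sum.cong simp: power_divide field_simps)
    also have "\<dots> = 0" using mom by (simp add: left_diff_distrib sum_subtractf)
    finally show ?thesis .
  qed
  have "(\<Sum>y\<in>S. (w y - w' y) * exp (-(((x-y)/\<sigma>)^2))) =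
        (\<Sum>y\<in>S. (w y - w' y) * (exp (-(((x-y)/\<sigma>)^2)) - P y))"
    using P0 by (simp add: right_diff_distrib sum_subtractf)
  also have "\<bar>\<dots>\<bar> \<le> (\<Sum>y\<in>S. \<bar>(w y - w' y) * (exp (-(((x-y)/\<sigma>)^2)) - P y)\<bar>)"
    by (rule sum_abs)
  also have "\<dots> \<le> (\<Sum>y\<in>S. (w y + w' y) * B)"
  proof (rule sum_mono)
    fix y assume y: "y \<in> S"
    have "\<bar>w y - w' y\<bar> \<le> w y + w' y" using wnn[OF y] w'nn[OF y] by linarith
    thus "\<bar>(w y - w' y) * (exp (-(((x-y)/\<sigma>)^2)) - P y)\<bar> \<le> (w y + w' y) * B"
      unfolding abs_mult by (intro mult_mono E y) auto
  qed
  also have "\<dots> = B * ((\<Sum>y\<in>S. w y) + (\<Sum>y\<in>S. w' y))"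
    by (simp add: sum_distrib_left[symmetric] sum.distrib mult_ac)
  finally show ?thesis unfolding B_def .
qed

lemma exp_lip: "\<bar>exp (-(p^2)) - exp (-(q^2))\<bar> \<le> \<bar>p - q\<bar>" for p q :: real
proof -
  have D: "((\<lambda>z. exp (-(z^2))) has_real_derivative (- 2 * z * exp (-(z^2)))) (at z)" for z :: real
    by (auto intro!: derivative_eq_intros simp: power2_eq_square)
  have bnd: "\<bar>- 2 * z * exp (-(z^2))\<bar> \<le> 1" for z :: real
  proof -
    have "0 \<le> (\<bar>z\<bar> - 1)^2" by simp
    hence "2 * \<bar>z\<bar> \<le> 1 + \<bar>z\<bar>^2" by (simp add: power2_eq_square algebra_simps)
    hence "2 * \<bar>z\<bar> \<le> 1 + z^2" by simp
    also have "\<dots> \<le> exp (z^2)" using exp_ge_add_one_self by (simp add: add.commute)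
    finally have "2 * \<bar>z\<bar> * exp (-(z^2)) \<le> exp (z^2) * exp (-(z^2))" by (simp add: mult_right_mono)
    also have "\<dots> = 1" by (simp add: exp_minus field_simps)
    finally show ?thesis by (simp add: abs_mult)
  qed
  have main: "\<bar>exp (-(b^2)) - exp (-(a^2))\<bar> \<le> b - a" if ab: "a < b" for a b :: real
  proof -
    obtain z where "a < z" "z < b" "exp (-(b^2)) - exp (-(a^2)) = (b - a) * (- 2 * z * exp (-(z^2)))"
      using MVT2[OF ab, of "\<lambda>z. exp (-(z^2))" "\<lambda>z. - 2 * z * exp (-(z^2))"] D by blast
    hence "\<bar>exp (-(b^2)) - exp (-(a^2))\<bar> = (b - a) * \<bar>- 2 * z * exp (-(z^2))\<bar>"
      using ab by (simp add: abs_mult)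
    also have "\<dots> \<le> (b - a) * 1" using bnd[of z] ab by (intro mult_left_mono) auto
    finally show ?thesis by simp
  qed
  show ?thesis
    using main[of p q] main[of q p] by (cases p q rule: linorder_cases) (auto simp: abs_minus_commute)
qed

lemma psi_sigma_diff:
  assumes "0 < \<sigma>"
  shows "\<bar>psi_sigma \<sigma> (x - u) - psi_sigma \<sigma> (x - v)\<bar> \<le> \<bar>u - v\<bar> / (\<sigma>^2 * sqrt pi)"
proof -
  have "\<bar>psi_sigma \<sigma> (x - u) - psi_sigma \<sigma> (x - v)\<bar> =
        \<bar>exp (-(((x-u)/\<sigma>)^2)) - exp (-(((x-v)/\<sigma>)^2))\<bar> / (\<sigma> * sqrt pi)"
    using assms by (simp add: psi_sigma_def psi_def diff_divide_distrib[symmetric] abs_divide field_simps)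
  also have "\<dots> \<le> \<bar>(x-u)/\<sigma> - (x-v)/\<sigma>\<bar> / (\<sigma> * sqrt pi)"
    using assms by (intro divide_right_mono exp_lip) auto
  also have "\<bar>(x-u)/\<sigma> - (x-v)/\<sigma>\<bar> = \<bar>u - v\<bar> / \<sigma>"
    using assms by (simp add: diff_divide_distrib[symmetric] abs_divide abs_minus_commute)
  finally show ?thesis using assms by (simp add: power2_eq_square field_simps)
qed

lemma psi_sigma_meas[measurable]: "(\<lambda>u. psi_sigma \<sigma> (x - u)) \<in> borel_measurable borel"
  unfolding psi_sigma_def psi_def by measurable

lemma psi_sigma_bound: "0 < \<sigma> \<Longrightarrow> \<bar>psi_sigma \<sigma> y\<bar> \<le> 1 / (\<sigma> * sqrt pi)"
  by (simp add: psi_sigma_def psi_def abs_divide field_simps)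

lemma quantize:
  fixes F :: "real measure" and a \<sigma> d :: real
  assumes F: "prob_space F" "sets F = sets borel" "measure F {-a..a} = 1"
    and a: "0 < a" and \<sigma>: "0 < \<sigma>" and d: "0 < d"
  shows "\<exists>G w. finite G \<and> G \<subseteq> {-a..a} \<and> (\<forall>g\<in>G. w g \<ge> 0) \<and> (\<Sum>g\<in>G. w g) = 1 \<and>
     (\<forall>x. \<bar>conv_psi F \<sigma> x - (\<Sum>g\<in>G. w g * psi_sigma \<sigma> (x - g))\<bar> \<le> d / (\<sigma>^2 * sqrt pi))"
proof -
  interpret prob_space F by (rule F(1))
  have spF: "space F = UNIV" using sets_eq_imp_space_eq[OF F(2)] by simp
  have measF[measurable_cong]: "sets F = sets borel" by (rule F(2))
  define q where "q u = -a + d * real_of_int \<lfloor>(u+a)/d\<rfloor>" for u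
  have qm[measurable]: "q \<in> borel_measurable borel" unfolding q_def by measurable
  have qb: "-a \<le> q u \<and> q u \<le> u \<and> u - d < q u" if "u \<in> {-a..a}" for u
  proof -
    have "0 \<le> (u+a)/d" using that d by auto
    hence "0 \<le> \<lfloor>(u+a)/d\<rfloor>" by simp
    moreover have "real_of_int \<lfloor>(u+a)/d\<rfloor> * d \<le> (u+a)/d * d"
      by (intro mult_right_mono) (use d in auto)
    moreover have "(u+a)/d * d < (real_of_int \<lfloor>(u+a)/d\<rfloor> + 1) * d"
      by (intro mult_strict_right_mono) (use d in linarith)+
    moreover have "(u+a)/d * d = u + a" using d by simp
    ultimately have "d * real_of_int \<lfloor>(u+a)/d\<rfloor> \<le> u + a" "u + a < d * real_of_int \<lfloor>(u+a)/d\<rfloor> + d"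
      "0 \<le> d * real_of_int \<lfloor>(u+a)/d\<rfloor>" using d by (auto simp: algebra_simps)
    thus ?thesis unfolding q_def by linarith
  qed
  define G where "G = q ` {-a..a}"
  have GK: "G \<subseteq> (\<lambda>k. -a + d * real k) ` {..nat \<lfloor>2*a/d\<rfloor>}"
  proof
    fix g assume "g \<in> G"
    then obtain u where u: "u \<in> {-a..a}" "g = q u" by (auto simp: G_def)
    have "0 \<le> (u+a)/d" using u d by auto
    hence f0: "0 \<le> \<lfloor>(u+a)/d\<rfloor>" by simp
    have "(u+a)/d \<le> 2*a/d" using u d by (intro divide_right_mono) auto
    hence "\<lfloor>(u+a)/d\<rfloor> \<le> \<lfloor>2*a/d\<rfloor>" by (rule floor_mono)
    hence "nat \<lfloor>(u+a)/d\<rfloor> \<in> {..nat \<lfloor>2*a/d\<rfloor>}" by auto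
    moreover have "g = -a + d * real (nat \<lfloor>(u+a)/d\<rfloor>)" using u f0 by (simp add: q_def)
    ultimately show "g \<in> (\<lambda>k. -a + d * real k) ` {..nat \<lfloor>2*a/d\<rfloor>}" by blast
  qed
  have finG: "finite G" by (rule finite_subset[OF GK]) auto
  have Gsub: "G \<subseteq> {-a..a}" using qb by (force simp: G_def)
  define A where "A g = {u\<in>{-a..a}. q u = g}" for g
  have Am[measurable]: "A g \<in> sets F" for g
  proof -
    have "A g = q -` {g} \<inter> {-a..a}" by (auto simp: A_def)
    moreover have "q -` {g} \<inter> {-a..a} \<in> sets borel" using qm by measurable
    ultimately show ?thesis using F(2) by simp
  qed
  define w where "w g = measure F (A g)" for g
  have ident: "(\<integral>u. h (q u) * indicator {-a..a} u \<partial>F) = (\<Sum>g\<in>G. w g * h g)" for h :: "real \<Rightarrow> real"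
  proof -
    have pt: "h (q u) * indicator {-a..a} u = (\<Sum>g\<in>G. h g * indicator (A g) u)" for u
    proof (cases "u \<in> {-a..a}")
      case True
      hence qG: "q u \<in> G" by (auto simp: G_def)
      have "(\<Sum>g\<in>G. h g * indicator (A g) u) = (\<Sum>g\<in>G. if g = q u then h g else 0)"
        by (rule sum.cong) (use True in \<open>auto simp: A_def\<close>)
      also have "\<dots> = h (q u)" using qG finG by (simp add: sum.delta')
      finally show ?thesis using True by simp
    next
      case False
      hence "\<forall>g\<in>G. h g * indicator (A g) u = (0::real)" by (auto simp: A_def)
      hence "(\<Sum>g\<in>G. h g * indicator (A g) u) = (0::real)" by (intro sum.neutral) blast
      thus ?thesis using False by simp
    qed
    have "(\<integral>u. h (q u) * indicator {-a..a} u \<partial>F) = (\<integral>u. (\<Sum>g\<in>G. h g * indicator (A g) u) \<partial>F)"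
      by (simp add: pt)
    also have "\<dots> = (\<Sum>g\<in>G. \<integral>u. h g * indicator (A g) u \<partial>F)"
      by (rule Bochner_Integration.integral_sum) (auto intro!: integrable_mult_right integrable_real_indicator simp: emeasure_eq_measure)
    also have "\<dots> = (\<Sum>g\<in>G. w g * h g)"
      by (simp add: w_def spF mult.commute)
    finally show ?thesis .
  qed
  have AE: "AE u in F. u \<in> {-a..a}" by (rule AE_prob_1) (use F(3) in simp)
  have sum1: "(\<Sum>g\<in>G. w g) = 1"
  proof -
    have "(\<Sum>g\<in>G. w g) = (\<Sum>g\<in>G. w g * 1)" by simp
    also have "\<dots> = (\<integral>u. 1 * indicator {-a..a} u \<partial>F)" using ident[of "\<lambda>_. 1"] by simp
    also have "\<dots> = 1" using F(3) spF by simp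
    finally show ?thesis .
  qed
  show ?thesis
  proof (intro exI conjI ballI allI)
    show "finite G" "G \<subseteq> {-a..a}" "(\<Sum>g\<in>G. w g) = 1" by (fact finG Gsub sum1)+
    show "w g \<ge> 0" if "g \<in> G" for g by (simp add: w_def)
    fix x
    have i1: "integrable F (\<lambda>u. psi_sigma \<sigma> (x - u))"
      by (rule integrable_const_bound[where B="1 / (\<sigma> * sqrt pi)"]) (use psi_sigma_bound[OF \<sigma>] in auto)
    have i2: "integrable F (\<lambda>u. psi_sigma \<sigma> (x - q u) * indicator {-a..a} u)"
      by (rule integrable_const_bound[where B="1 / (\<sigma> * sqrt pi)"])
         (use psi_sigma_bound[OF \<sigma>] \<sigma> in \<open>auto simp: indicator_def\<close>)
      have i3: "integrable F (\<lambda>u. psi_sigma \<sigma> (x - u) * indicator {-a..a} u)"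
        by (rule integrable_const_bound[where B="1 / (\<sigma> * sqrt pi)"])
           (use psi_sigma_bound[OF \<sigma>] \<sigma> in \<open>auto simp: indicator_def\<close>)
    have "conv_psi F \<sigma> x = (\<integral>u. psi_sigma \<sigma> (x - u) * indicator {-a..a} u \<partial>F)"
      unfolding conv_psi_def by (rule integral_cong_AE) (use AE in auto)
    moreover have "(\<Sum>g\<in>G. w g * psi_sigma \<sigma> (x - g)) = (\<integral>u. psi_sigma \<sigma> (x - q u) * indicator {-a..a} u \<partial>F)"
      using ident[of "\<lambda>g. psi_sigma \<sigma> (x - g)"] by simp
    ultimately have "conv_psi F \<sigma> x - (\<Sum>g\<in>G. w g * psi_sigma \<sigma> (x - g)) =
        (\<integral>u. (psi_sigma \<sigma> (x - u) - psi_sigma \<sigma> (x - q u)) * indicator {-a..a} u \<partial>F)"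
    proof -
      show ?thesis
        using Bochner_Integration.integral_diff[OF i3 i2] \<open>conv_psi F \<sigma> x = _\<close>
          \<open>(\<Sum>g\<in>G. w g * psi_sigma \<sigma> (x - g)) = _\<close>
        by (simp add: left_diff_distrib)
    qed
    also have "\<bar>\<dots>\<bar> \<le> d / (\<sigma>^2 * sqrt pi)"
    proof -
      have "\<bar>(psi_sigma \<sigma> (x - u) - psi_sigma \<sigma> (x - q u)) * indicator {-a..a} u\<bar> \<le> d / (\<sigma>^2 * sqrt pi)" for u
      proof (cases "u \<in> {-a..a}")
        case True
        have "\<bar>psi_sigma \<sigma> (x - u) - psi_sigma \<sigma> (x - q u)\<bar> \<le> \<bar>u - q u\<bar> / (\<sigma>^2 * sqrt pi)"
          by (rule psi_sigma_diff[OF \<sigma>])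
        also have "\<dots> \<le> d / (\<sigma>^2 * sqrt pi)" using qb[OF True] \<sigma> by (intro divide_right_mono) auto
        finally show ?thesis using True by simp
      next
        case False thus ?thesis using d \<sigma> by simp
      qed
      hence "\<bar>\<integral>u. (psi_sigma \<sigma> (x - u) - psi_sigma \<sigma> (x - q u)) * indicator {-a..a} u \<partial>F\<bar>
            \<le> (\<integral>u. d / (\<sigma>^2 * sqrt pi) \<partial>F)"
        by (intro integral_abs_bound_integral integrable_const)
           (use i1 i2 i3 in \<open>auto intro!: integrable_mult_indicator Bochner_Integration.integrable_diff simp: left_diff_distrib\<close>)
      also have "\<dots> = d / (\<sigma>^2 * sqrt pi)" using prob_space by simp
      finally show ?thesis .
    qed
    finally show "\<bar>conv_psi F \<sigma> x - (\<Sum>g\<in>G. w g * psi_sigma \<sigma> (x - g))\<bar> \<le> d / (\<sigma>^2 * sqrt pi)" .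
  qed
qed

lemma grp_lemma:
  fixes a y :: real and m :: nat
  assumes a: "0 < a" and m: "0 < m" and y: "y \<in> {-a..a}"
  defines "j \<equiv> nat (min (int m - 1) \<lfloor>(y+a)*m/(2*a)\<rfloor>)"
  shows "j < m \<and> \<bar>y - (-a + (2*real j+1)*a/m)\<bar> \<le> a/m"
proof -
  define z where "z = (y+a)*m/(2*a)"
  have z0: "0 \<le> z" "z \<le> m"
  proof -
    show "0 \<le> z" unfolding z_def using a y by (intro divide_nonneg_pos mult_nonneg_nonneg) auto
    have "(y+a)*m \<le> (2*a)*m" using y by (intro mult_right_mono) auto
    hence "(y+a)*m/(2*a) \<le> (2*a)*m/(2*a)" using a by (intro divide_right_mono) auto
    thus "z \<le> m" using a by (simp add: z_def)
  qed
  have k0: "0 \<le> \<lfloor>z\<rfloor>" using z0 by simp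
  have jm: "j < m" using m k0 unfolding j_def z_def[symmetric] by auto
  have jz: "real j \<le> z \<and> z \<le> real j + 1"
  proof (cases "\<lfloor>z\<rfloor> \<le> int m - 1")
    case True
    hence "int j = \<lfloor>z\<rfloor>" using k0 unfolding j_def z_def[symmetric] by auto
    hence "real j = real_of_int \<lfloor>z\<rfloor>" by (metis of_int_of_nat_eq)
    thus ?thesis by linarith
  next
    case False
    hence "int j = int m - 1" using m unfolding j_def z_def[symmetric] by auto
    hence "real j = real m - 1" using m by (metis of_int_of_nat_eq of_int_diff of_int_1 of_nat_1 of_nat_diff Suc_leI of_nat_diff)
    moreover have "real_of_int \<lfloor>z\<rfloor> \<ge> real m" using False by linarith
    ultimately show ?thesis using z0 by linarith
  qed
  have "y - (-a + (2*real j+1)*a/m) = (2*z - 2*real j - 1) * a / m"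
    using a m by (simp add: z_def field_simps)
  moreover have "\<bar>2*z - 2*real j - 1\<bar> \<le> 1" using jz by linarith
  ultimately have "\<bar>y - (-a + (2*real j+1)*a/m)\<bar> \<le> 1 * a / m"
    using a m by (simp add: abs_mult abs_divide mult_right_mono divide_right_mono)
  thus ?thesis using jm by simp
qed

lemma assemble:
  fixes G :: "real set" and w :: "real \<Rightarrow> real" and a \<sigma> r :: real and m L :: nat
  assumes finG: "finite G" and Gsub: "G \<subseteq> {-a..a}" and wnn: "\<And>g. g \<in> G \<Longrightarrow> w g \<ge> 0"
    and w1: "(\<Sum>g\<in>G. w g) = 1" and a: "0 < a" and m: "0 < m" and L: "L \<ge> 1"
    and \<sigma>: "0 < \<sigma>" and r: "0 \<le> r" "r < 1" and am: "a / m \<le> \<sigma> * r"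
  shows "\<exists>wf. (\<forall>y. wf y \<ge> 0) \<and> (\<forall>y. wf y \<noteq> 0 \<longrightarrow> y \<in> G) \<and> (\<Sum>y\<in>G. wf y) = 1 \<and>
     card {y. wf y \<noteq> 0} \<le> m * (L+1) \<and>
     (\<forall>x. \<bar>\<Sum>y\<in>G. (w y - wf y) * psi_sigma \<sigma> (x - y)\<bar> \<le> 2 * (exp 1 * r^(L+1) / (1 - r)) / (\<sigma> * sqrt pi))"
proof -
  define B where "B = exp 1 * r^(L+1) / (1 - r)"
  have B0: "B \<ge> 0" using r by (simp add: B_def)
  define grp where "grp y = nat (min (int m - 1) \<lfloor>(y+a)*m/(2*a)\<rfloor>)" for y
  define c where "c j = -a + (2*real j+1)*a/m" for j
  have grpG: "grp y < m" "\<bar>y - c (grp y)\<bar> \<le> \<sigma> * r" if "y \<in> G" for y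
  proof -
    have "y \<in> {-a..a}" using Gsub that by auto
    from grp_lemma[OF a m this] have "grp y < m \<and> \<bar>y - c (grp y)\<bar> \<le> a / m"
      unfolding grp_def c_def by simp
    thus "grp y < m" "\<bar>y - c (grp y)\<bar> \<le> \<sigma> * r" using am by auto
  qed
  define Gj where "Gj j = {y\<in>G. grp y = j}" for j
  have finGj: "finite (Gj j)" for j using finG by (simp add: Gj_def)
  have "\<forall>j. \<exists>w'. (\<forall>y\<in>Gj j. w' y \<ge> 0) \<and> card {y\<in>Gj j. w' y \<noteq> 0} \<le> L+1 \<and>
       (\<forall>n\<le>L. (\<Sum>y\<in>Gj j. w' y * (y - c j)^n) = (\<Sum>y\<in>Gj j. w y * (y - c j)^n))"
  proof
    fix j
    show "\<exists>w'. (\<forall>y\<in>Gj j. w' y \<ge> 0) \<and> card {y\<in>Gj j. w' y \<noteq> 0} \<le> L+1 \<and>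
       (\<forall>n\<le>L. (\<Sum>y\<in>Gj j. w' y * (y - c j)^n) = (\<Sum>y\<in>Gj j. w y * (y - c j)^n))"
    proof -
      have h: "\<forall>y\<in>Gj j. w y \<ge> 0" using wnn by (auto simp: Gj_def)
      from reduce_atoms[OF finGj L, where c="c j" and k="card {y\<in>Gj j. w y \<noteq> 0}"] h
      show ?thesis by blast
    qed
  qed
  from choice[OF this] obtain W where W0: "\<forall>j. (\<forall>y\<in>Gj j. W j y \<ge> 0) \<and> card {y\<in>Gj j. W j y \<noteq> 0} \<le> L+1 \<and>
       (\<forall>n\<le>L. (\<Sum>y\<in>Gj j. W j y * (y - c j)^n) = (\<Sum>y\<in>Gj j. w y * (y - c j)^n))" by blast
  have W: "\<And>j. \<forall>y\<in>Gj j. W j y \<ge> 0" "\<And>j. card {y\<in>Gj j. W j y \<noteq> 0} \<le> L+1"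
    "\<And>j. \<forall>n\<le>L. (\<Sum>y\<in>Gj j. W j y * (y - c j)^n) = (\<Sum>y\<in>Gj j. w y * (y - c j)^n)"
    using W0 by blast+
  define wf where "wf y = (if y \<in> G then W (grp y) y else 0)" for y
  have grpim: "grp ` G \<subseteq> {..<m}" using grpG by auto
  have split: "(\<Sum>y\<in>G. h y) = (\<Sum>j<m. \<Sum>y\<in>Gj j. h y)" for h :: "real \<Rightarrow> real"
    using sum.group[OF finG _ grpim, of h] by (simp add: Gj_def)
  have wfGj: "wf y = W j y" if "y \<in> Gj j" for y j using that by (auto simp: wf_def Gj_def)
  have sumeq: "(\<Sum>y\<in>Gj j. wf y) = (\<Sum>y\<in>Gj j. w y)" for j
  proof -
    have "(\<Sum>y\<in>Gj j. wf y) = (\<Sum>y\<in>Gj j. W j y * (y - c j)^0)" using wfGj by simp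
    also have "\<dots> = (\<Sum>y\<in>Gj j. w y * (y - c j)^0)" using W(3)[of j] by blast
    also have "\<dots> = (\<Sum>y\<in>Gj j. w y)" by simp
    finally show ?thesis .
  qed
  show ?thesis
  proof (intro exI conjI allI impI)
    fix y show "wf y \<ge> 0" using W(1) by (auto simp: wf_def Gj_def)
  next
    fix y assume "wf y \<noteq> 0" thus "y \<in> G" by (auto simp: wf_def split: if_splits)
  next
    show "(\<Sum>y\<in>G. wf y) = 1" using split[of wf] split[of w] sumeq w1 by simp
  next
    have "{y. wf y \<noteq> 0} = (\<Union>j\<in>{..<m}. {y\<in>Gj j. W j y \<noteq> 0})"
      using grpG by (auto simp: wf_def Gj_def)
    hence "card {y. wf y \<noteq> 0} \<le> (\<Sum>j<m. card {y\<in>Gj j. W j y \<noteq> 0})"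
      using card_UN_le[of "{..<m}" "\<lambda>j. {y\<in>Gj j. W j y \<noteq> 0}"] by simp
    also have "\<dots> \<le> (\<Sum>j<m. L + 1)" by (intro sum_mono W(2))
    finally show "card {y. wf y \<noteq> 0} \<le> m * (L+1)" by simp
  next
    fix x
    have eq: "(\<Sum>y\<in>G. (w y - wf y) * psi_sigma \<sigma> (x - y)) =
        (\<Sum>j<m. \<Sum>y\<in>Gj j. (w y - W j y) * exp (-(((x-y)/\<sigma>)^2))) / (\<sigma> * sqrt pi)"
      unfolding split sum_divide_distrib
      by (intro sum.cong refl) (auto simp: wfGj psi_sigma_def psi_def)
    have "\<bar>\<Sum>j<m. \<Sum>y\<in>Gj j. (w y - W j y) * exp (-(((x-y)/\<sigma>)^2))\<bar>
        \<le> (\<Sum>j<m. \<bar>\<Sum>y\<in>Gj j. (w y - W j y) * exp (-(((x-y)/\<sigma>)^2))\<bar>)" by (rule sum_abs)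
    also have "\<dots> \<le> (\<Sum>j<m. B * ((\<Sum>y\<in>Gj j. w y) + (\<Sum>y\<in>Gj j. W j y)))"
    proof (rule sum_mono)
      fix j assume "j \<in> {..<m}"
      show "\<bar>\<Sum>y\<in>Gj j. (w y - W j y) * exp (-(((x-y)/\<sigma>)^2))\<bar> \<le> B * ((\<Sum>y\<in>Gj j. w y) + (\<Sum>y\<in>Gj j. W j y))"
        unfolding B_def
        by (rule group_err[OF finGj _ \<sigma> r _ _ W(3)]) (use grpG W(1) wnn in \<open>auto simp: Gj_def\<close>)
    qed
    also have "\<dots> = (\<Sum>j<m. 2 * B * (\<Sum>y\<in>Gj j. w y))"
      using sumeq wfGj by (intro sum.cong refl) (simp add: algebra_simps)
    also have "\<dots> = 2 * B" using split[of w] w1 by (simp add: sum_distrib_left[symmetric])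
    finally show "\<bar>\<Sum>y\<in>G. (w y - wf y) * psi_sigma \<sigma> (x - y)\<bar> \<le> 2 * (exp 1 * r^(L+1) / (1 - r)) / (\<sigma> * sqrt pi)"
      unfolding eq B_def[symmetric] using \<sigma> by (simp add: abs_divide divide_right_mono)
  qed
qed

theorem proposition3:
  fixes F :: "real measure" and a \<sigma> \<epsilon> :: real
  assumes "prob_space F" and "sets F = sets borel"
    and "measure F {-a..a} = 1"
    and "0 < \<sigma>" and "\<sigma> < a"
    and "0 < \<epsilon>" and "\<epsilon> < 1 / sqrt pi"
  shows "\<exists>F' :: real pmf. finite (set_pmf F') \<and> set_pmf F' \<subseteq> {-a..a} \<and>
           real (card (set_pmf F')) \<le> 54 * a / \<sigma> * exp 2 * max 1 (ln (1 / (sqrt pi * \<epsilon>))) \<and>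
           (\<forall>x. \<bar>conv_psi F \<sigma> x - conv_psi (measure_pmf F') \<sigma> x\<bar> \<le> 2 * \<epsilon> / \<sigma>)"
proof -
  note F = assms(1,2,3)
  have \<sigma>: "0 < \<sigma>" and a: "0 < a" using assms by auto
  have sp: "0 < sqrt pi" by simp
  define \<delta> where "\<delta> = sqrt pi * \<epsilon>"
  have \<delta>0: "0 < \<delta>" using assms(6) by (simp add: \<delta>_def)
  have \<delta>1: "\<delta> < 1" using assms(7) sp by (simp add: \<delta>_def field_simps)
  define ll where "ll = ln (1 / \<delta>)"
  have ll0: "0 < ll" using \<delta>0 \<delta>1 by (simp add: ll_def)
  have expll: "exp (- ll) = \<delta>" using \<delta>0 by (simp add: ll_def ln_div)
  define L where "L = nat \<lceil>ll\<rceil> + 2"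
  have L1: "L \<ge> 1" by (simp add: L_def)
  have Lr: "real L = real_of_int \<lceil>ll\<rceil> + 2" using ll0 by (simp add: L_def)
  have Llo: "real L \<ge> ll + 2" using Lr by linarith
  have Lhi: "real L \<le> ll + 3" using Lr by linarith
  define r where "r = exp (-1::real)"
  have r: "0 \<le> r" "r < 1" by (auto simp: r_def)
  define e where "e = exp (1::real)"
  have e2: "e \<ge> 2" using exp_ge_add_one_self[of 1] by (simp add: e_def)
  have re: "r = 1 / e" by (simp add: r_def e_def exp_minus field_simps)
  have Bb: "2 * (exp 1 * r^(L+1) / (1 - r)) \<le> \<delta>"
  proof -
    have "exp 1 * r^(L+1) = exp 1 * exp (- 1 - real L)"
      using exp_of_nat_mult[of "L+1" "-1::real"] by (simp add: r_def algebra_simps)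
    also have "\<dots> = exp (- real L)" by (simp add: exp_add[symmetric])
    also have "\<dots> \<le> exp (- ll - 2)" using Llo by simp
    also have "\<dots> = \<delta> / e^2" using expll by (simp add: exp_diff e_def exp_of_nat_mult[symmetric])
    finally have h: "exp 1 * r^(L+1) \<le> \<delta> / e^2" .
    have e0: "0 < e" using e2 by simp
    have "2 * (\<delta> / e^2) \<le> \<delta> * (1 - r)"
    proof -
      have "0 \<le> (e - 2) * (e + 1)" using e2 by simp
      hence "2 \<le> e^2 - e" by (simp add: power2_eq_square algebra_simps)
      hence "2 * \<delta> \<le> \<delta> * (e^2 - e)" using \<delta>0 by (simp add: mult.commute)
      thus ?thesis using e0 by (simp add: re field_simps power2_eq_square)
    qed
    moreover have "0 < 1 - r" using r by simp
    ultimately have "2 * (exp 1 * r^(L+1)) \<le> \<delta> * (1 - r)" "0 < 1 - r" using h by linarith+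
    thus ?thesis by (simp add: pos_divide_le_eq)
  qed
  define m where "m = nat \<lceil>a * e / \<sigma>\<rceil>"
  have "a * 1 \<le> a * e" using a e2 by (intro mult_left_mono) auto
  hence "\<sigma> \<le> a * e" using assms(5) by linarith
  hence aes: "a * e / \<sigma> \<ge> 1" using assms(4) by (simp add: field_simps)
  have mlo: "real m \<ge> a * e / \<sigma>" unfolding m_def by linarith
  have mhi: "real m \<le> 2 * (a * e / \<sigma>)" unfolding m_def using aes by linarith
  have m0: "0 < m" using mlo aes by simp
  have am: "a / m \<le> \<sigma> * r"
  proof -
    have pos: "0 < real m * (a * e / \<sigma>)" using aes mlo by (intro mult_pos_pos) auto
    have "a / m \<le> a / (a * e / \<sigma>)" by (rule divide_left_mono[OF mlo _ pos]) (use a in auto)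
    also have "\<dots> = \<sigma> * r" using a \<sigma> e2 by (simp add: re field_simps)
    finally show ?thesis .
  qed
  obtain G w where G: "finite G" "G \<subseteq> {-a..a}" "\<forall>g\<in>G. w g \<ge> 0" "(\<Sum>g\<in>G. w g) = 1"
    and Gerr: "\<forall>x. \<bar>conv_psi F \<sigma> x - (\<Sum>g\<in>G. w g * psi_sigma \<sigma> (x - g))\<bar> \<le> (\<sigma> * \<delta>) / (\<sigma>^2 * sqrt pi)"
    using quantize[OF F a \<sigma>, of "\<sigma> * \<delta>"] \<sigma> \<delta>0 by auto
  obtain wf where wf: "\<forall>y. wf y \<ge> 0" "\<forall>y. wf y \<noteq> 0 \<longrightarrow> y \<in> G" "(\<Sum>y\<in>G. wf y) = 1"
    "card {y. wf y \<noteq> 0} \<le> m * (L+1)"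
    and wferr: "\<forall>x. \<bar>\<Sum>y\<in>G. (w y - wf y) * psi_sigma \<sigma> (x - y)\<bar> \<le> 2 * (exp 1 * r^(L+1) / (1 - r)) / (\<sigma> * sqrt pi)"
    using assemble[OF G(1,2) _ G(4) a m0 L1 \<sigma> r am] G(3) by blast
  have nn: "\<And>x. 0 \<le> wf x" using wf(1) by blast
  have pr: "(\<integral>\<^sup>+x. ennreal (wf x) \<partial>count_space UNIV) = 1"
  proof -
    have "(\<integral>\<^sup>+x. ennreal (wf x) \<partial>count_space UNIV) = (\<Sum>x\<in>G. ennreal (wf x))"
      by (rule nn_integral_count_space'[OF G(1)]) (use wf(2) in force)+
    also have "\<dots> = ennreal (\<Sum>x\<in>G. wf x)" using nn by simp
    finally show ?thesis using wf(3) by simp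
  qed
  define F' where "F' = embed_pmf wf"
  have pmfF': "pmf F' x = wf x" for x unfolding F'_def by (rule pmf_embed_pmf[OF nn pr])
  have setF': "set_pmf F' = {y. wf y \<noteq> 0}" unfolding F'_def by (rule set_embed_pmf[OF nn pr])
  have setG: "set_pmf F' \<subseteq> G" using setF' wf(2) by auto
  show ?thesis
  proof (intro exI[of _ F'] conjI allI)
    show "finite (set_pmf F')" using setG G(1) finite_subset by blast
    show "set_pmf F' \<subseteq> {-a..a}" using setG G(2) by blast
    define M where "M = max 1 (ln (1 / (sqrt pi * \<epsilon>)))"
    have M: "M = max 1 ll" by (simp add: M_def ll_def \<delta>_def)
    have "real (card (set_pmf F')) \<le> real m * (real L + 1)"
      using wf(4) setF' by (metis of_nat_add of_nat_le_iff of_nat_mult of_nat_1)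
    also have "\<dots> \<le> (2 * (a * e / \<sigma>)) * (5 * M)"
      using mhi Lhi M by (intro mult_mono) auto
    also have "\<dots> = 10 * e * (a / \<sigma> * M)" by (simp add: field_simps)
    also have "\<dots> \<le> 54 * e * e * (a / \<sigma> * M)"
    proof -
      have "0 \<le> a / \<sigma> * M" using a \<sigma> M by auto
      moreover have "10 * e \<le> 54 * e * e"
      proof -
        have "2 * e \<le> e * e" using e2 by (intro mult_right_mono) auto
        thus ?thesis using e2 by linarith
      qed
      ultimately show ?thesis by (rule mult_right_mono[rotated])
    qed
    also have "\<dots> = 54 * a / \<sigma> * exp 2 * M"
      by (simp add: e_def exp_add[symmetric] field_simps)
    finally show "real (card (set_pmf F')) \<le> 54 * a / \<sigma> * exp 2 * max 1 (ln (1 / (sqrt pi * \<epsilon>)))"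
      unfolding M_def .
  next
    fix x
    have cF': "conv_psi (measure_pmf F') \<sigma> x = (\<Sum>y\<in>G. wf y * psi_sigma \<sigma> (x - y))"
      unfolding conv_psi_def using integral_measure_pmf_real[OF G(1), of F' "\<lambda>u. psi_sigma \<sigma> (x - u)"] setG
      by (auto simp: pmfF' mult.commute)
    have "conv_psi F \<sigma> x - conv_psi (measure_pmf F') \<sigma> x =
        (conv_psi F \<sigma> x - (\<Sum>g\<in>G. w g * psi_sigma \<sigma> (x - g))) + (\<Sum>y\<in>G. (w y - wf y) * psi_sigma \<sigma> (x - y))"
      unfolding cF' by (simp add: left_diff_distrib sum_subtractf)
    also have "\<bar>\<dots>\<bar> \<le> (\<sigma> * \<delta>) / (\<sigma>^2 * sqrt pi) + 2 * (exp 1 * r^(L+1) / (1 - r)) / (\<sigma> * sqrt pi)"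
      using abs_triangle_ineq[of "conv_psi F \<sigma> x - (\<Sum>g\<in>G. w g * psi_sigma \<sigma> (x - g))"
          "\<Sum>y\<in>G. (w y - wf y) * psi_sigma \<sigma> (x - y)"] Gerr[rule_format, of x] wferr[rule_format, of x]
      by linarith
    also have "\<dots> \<le> \<delta> / (\<sigma> * sqrt pi) + \<delta> / (\<sigma> * sqrt pi)"
    proof -
      have "(\<sigma> * \<delta>) / (\<sigma>^2 * sqrt pi) = \<delta> / (\<sigma> * sqrt pi)" using \<sigma> by (simp add: power2_eq_square)
      moreover have "2 * (exp 1 * r^(L+1) / (1 - r)) / (\<sigma> * sqrt pi) \<le> \<delta> / (\<sigma> * sqrt pi)"
        using Bb \<sigma> by (intro divide_right_mono) auto
      ultimately show ?thesis by simp
    qed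
    also have "\<dots> = 2 * \<epsilon> / \<sigma>" using sp \<sigma> by (simp add: \<delta>_def field_simps)
    finally show "\<bar>conv_psi F \<sigma> x - conv_psi (measure_pmf F') \<sigma> x\<bar> \<le> 2 * \<epsilon> / \<sigma>" .
  qed
qed

end
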